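(* Let $A$ be an associative unital algebra and $(H,\pi_l,\pi_r,\psi_l,\psi_r)$ an L-R-twisting datum for $A$. Then $A$ with the product $a\bullet b=(a_{[0]}\cdot b_{<1>})(a_{[-1]}\cdot b_{<0>})$ and the original unit $1$ is an associative unital algebra.
   Context: Work over a field $k$; $H$ an ordinary bialgebra, $\Delta(h)=h_1\otimes h_2$. An L-R-twisting datum for an algebra $A$ is a bialgebra $H$ together with: (i) an $H$-bimodule algebra structure on $A$, i.e. actions $\pi_l(h\otimes a)=h\cdot a$, $\pi_r(a\otimes h)=a\cdot h$ making $A$ an $H$-bimodule with $h\cdot(ab)=(h_1\cdot a)(h_2\cdot b)$, $(ab)\cdot h=(a\cdot h_1)(b\cdot h_2)$, $h\cdot1=1\cdot h=\varepsilon(h)1$; (ii) an $H$-bicomodule algebra structure on $A$, i.e. algebra maps $\psi_l(a)=a_{[-1]}\otimes a_{[0]}$, $\psi_r(a)=a_{<0>}\otimes a_{<1>}$ making $A$ an $H$-bicomodule; (iii) for all $h\in H$, $a\in A$: $(h\cdot a)_{[-1]}\otimes(h\cdot a)_{[0]}=a_{[-1]}\otimes h\cdot a_{[0]}$, $(h\cdot a)_{<0>}\otimes(h\cdot a)_{<1>}=h\cdot a_{<0>}\otimes a_{<1>}$, $(a\cdot h)_{[-1]}\otimes(a\cdot h)_{[0]}=a_{[-1]}\otimes a_{[0]}\cdot h$, $(a\cdot h)_{<0>}\otimes(a\cdot h)_{<1>}=a_{<0>}\cdot h\otimes a_{<1>}$. *)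

theory Defs
  imports Main "HOL.Vector_Spaces"
begin

text \<open>An element of a tensor product V (x) W of k-vector spaces is represented by a
finite list of pairs, standing for the finite sum of the simple tensors v (x) w.
Two representations denote the same tensor iff they agree under every k-bilinear
form (over a field, bilinear forms separate the points of V (x) W).  Similarly for
threefold tensor products with trilinear forms.  Sweedler sums are sums over the
corresponding list.\<close>

definition bilin ::
  "('k::field \<Rightarrow> 'v::ab_group_add \<Rightarrow> 'v) \<Rightarrow> ('k \<Rightarrow> 'w::ab_group_add \<Rightarrow> 'w)
   \<Rightarrow> ('v \<Rightarrow> 'w \<Rightarrow> 'k) \<Rightarrow> bool" where
  "bilin sV sW f \<longleftrightarrow>
     (\<forall>v. Vector_Spaces.linear sW times (f v)) \<and>
     (\<forall>w. Vector_Spaces.linear sV times (\<lambda>v. f v w))"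

definition trilin ::
  "('k::field \<Rightarrow> 'u::ab_group_add \<Rightarrow> 'u) \<Rightarrow> ('k \<Rightarrow> 'v::ab_group_add \<Rightarrow> 'v)
   \<Rightarrow> ('k \<Rightarrow> 'w::ab_group_add \<Rightarrow> 'w) \<Rightarrow> ('u \<Rightarrow> 'v \<Rightarrow> 'w \<Rightarrow> 'k) \<Rightarrow> bool" where
  "trilin sU sV sW f \<longleftrightarrow>
     (\<forall>v w. Vector_Spaces.linear sU times (\<lambda>u. f u v w)) \<and>
     (\<forall>u w. Vector_Spaces.linear sV times (\<lambda>v. f u v w)) \<and>
     (\<forall>u v. Vector_Spaces.linear sW times (\<lambda>w. f u v w))"

definition teq2 ::
  "('k::field \<Rightarrow> 'v::ab_group_add \<Rightarrow> 'v) \<Rightarrow> ('k \<Rightarrow> 'w::ab_group_add \<Rightarrow> 'w)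
   \<Rightarrow> ('v \<times> 'w) list \<Rightarrow> ('v \<times> 'w) list \<Rightarrow> bool" where
  "teq2 sV sW xs ys \<longleftrightarrow>
     (\<forall>f. bilin sV sW f \<longrightarrow>
        sum_list (map (\<lambda>(v, w). f v w) xs) = sum_list (map (\<lambda>(v, w). f v w) ys))"

definition teq3 ::
  "('k::field \<Rightarrow> 'u::ab_group_add \<Rightarrow> 'u) \<Rightarrow> ('k \<Rightarrow> 'v::ab_group_add \<Rightarrow> 'v)
   \<Rightarrow> ('k \<Rightarrow> 'w::ab_group_add \<Rightarrow> 'w)
   \<Rightarrow> ('u \<times> 'v \<times> 'w) list \<Rightarrow> ('u \<times> 'v \<times> 'w) list \<Rightarrow> bool" where
  "teq3 sU sV sW xs ys \<longleftrightarrow>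
     (\<forall>f. trilin sU sV sW f \<longrightarrow>
        sum_list (map (\<lambda>(u, v, w). f u v w) xs) = sum_list (map (\<lambda>(u, v, w). f u v w) ys))"

definition tmul :: "('b::times \<times> 'c::times) list \<Rightarrow> ('b \<times> 'c) list \<Rightarrow> ('b \<times> 'c) list" where
  "tmul xs ys = concat (map (\<lambda>(x, y). map (\<lambda>(x', y'). (x * x', y * y')) ys) xs)"

text \<open>f (x) id and id (x) f applied to a represented tensor.\<close>
definition tmap_l :: "('a \<Rightarrow> ('b \<times> 'c) list) \<Rightarrow> ('a \<times> 'd) list \<Rightarrow> ('b \<times> 'c \<times> 'd) list" where
  "tmap_l f xs = concat (map (\<lambda>(x, y). map (\<lambda>(x1, x2). (x1, x2, y)) (f x)) xs)"

definition tmap_r :: "('d \<Rightarrow> ('b \<times> 'c) list) \<Rightarrow> ('a \<times> 'd) list \<Rightarrow> ('a \<times> 'b \<times> 'c) list" where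
  "tmap_r f xs = concat (map (\<lambda>(x, y). map (\<lambda>(y1, y2). (x, y1, y2)) (f y)) xs)"

definition k_algebra :: "('k::field \<Rightarrow> 'a::ring_1 \<Rightarrow> 'a) \<Rightarrow> bool" where
  "k_algebra s \<longleftrightarrow> vector_space s \<and>
     (\<forall>c x y. s c (x * y) = s c x * y \<and> s c (x * y) = x * s c y)"

definition tlinear ::
  "('k::field \<Rightarrow> 'a::ab_group_add \<Rightarrow> 'a) \<Rightarrow> ('k \<Rightarrow> 'v::ab_group_add \<Rightarrow> 'v)
   \<Rightarrow> ('k \<Rightarrow> 'w::ab_group_add \<Rightarrow> 'w) \<Rightarrow> ('a \<Rightarrow> ('v \<times> 'w) list) \<Rightarrow> bool" where
  "tlinear sA sV sW f \<longleftrightarrow>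
     (\<forall>x y. teq2 sV sW (f (x + y)) (f x @ f y)) \<and>
     (\<forall>c x. teq2 sV sW (f (sA c x)) (map (\<lambda>(v, w). (sV c v, w)) (f x)))"

definition bialgebra ::
  "('k::field \<Rightarrow> 'h::ring_1 \<Rightarrow> 'h) \<Rightarrow> ('h \<Rightarrow> ('h \<times> 'h) list) \<Rightarrow> ('h \<Rightarrow> 'k) \<Rightarrow> bool" where
  "bialgebra sH \<Delta> \<epsilon> \<longleftrightarrow>
     k_algebra sH \<and>
     tlinear sH sH sH \<Delta> \<and>
     Vector_Spaces.linear sH times \<epsilon> \<and>
     (\<forall>h. teq3 sH sH sH (tmap_l \<Delta> (\<Delta> h)) (tmap_r \<Delta> (\<Delta> h))) \<and>
     (\<forall>h. sum_list (map (\<lambda>(x, y). sH (\<epsilon> x) y) (\<Delta> h)) = h) \<and>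
     (\<forall>h. sum_list (map (\<lambda>(x, y). sH (\<epsilon> y) x) (\<Delta> h)) = h) \<and>
     (\<forall>g h. teq2 sH sH (\<Delta> (g * h)) (tmul (\<Delta> g) (\<Delta> h))) \<and>
     teq2 sH sH (\<Delta> 1) [(1, 1)] \<and>
     (\<forall>g h. \<epsilon> (g * h) = \<epsilon> g * \<epsilon> h) \<and>
     \<epsilon> 1 = 1"

definition bimodule_algebra ::
  "('k::field \<Rightarrow> 'h::ring_1 \<Rightarrow> 'h) \<Rightarrow> ('h \<Rightarrow> ('h \<times> 'h) list) \<Rightarrow> ('h \<Rightarrow> 'k)
   \<Rightarrow> ('k \<Rightarrow> 'a::ring_1 \<Rightarrow> 'a) \<Rightarrow> ('h \<Rightarrow> 'a \<Rightarrow> 'a) \<Rightarrow> ('a \<Rightarrow> 'h \<Rightarrow> 'a) \<Rightarrow> bool" where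
  "bimodule_algebra sH \<Delta> \<epsilon> sA pl pr \<longleftrightarrow>
     \<comment> \<open>k-bilinearity of the actions\<close>
     (\<forall>h. Vector_Spaces.linear sA sA (pl h)) \<and>
     (\<forall>a. Vector_Spaces.linear sH sA (\<lambda>h. pl h a)) \<and>
     (\<forall>h. Vector_Spaces.linear sA sA (\<lambda>a. pr a h)) \<and>
     (\<forall>a. Vector_Spaces.linear sH sA (pr a)) \<and>
     \<comment> \<open>left module, right module, bimodule\<close>
     (\<forall>g h a. pl (g * h) a = pl g (pl h a)) \<and>
     (\<forall>a. pl 1 a = a) \<and>
     (\<forall>g h a. pr a (g * h) = pr (pr a g) h) \<and>
     (\<forall>a. pr a 1 = a) \<and>
     (\<forall>g h a. pr (pl h a) g = pl h (pr a g)) \<and>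
     \<comment> \<open>module algebra conditions\<close>
     (\<forall>h a b. pl h (a * b) = sum_list (map (\<lambda>(h1, h2). pl h1 a * pl h2 b) (\<Delta> h))) \<and>
     (\<forall>h a b. pr (a * b) h = sum_list (map (\<lambda>(h1, h2). pr a h1 * pr b h2) (\<Delta> h))) \<and>
     (\<forall>h. pl h 1 = sA (\<epsilon> h) 1) \<and>
     (\<forall>h. pr 1 h = sA (\<epsilon> h) 1)"

definition bicomodule_algebra ::
  "('k::field \<Rightarrow> 'h::ring_1 \<Rightarrow> 'h) \<Rightarrow> ('h \<Rightarrow> ('h \<times> 'h) list) \<Rightarrow> ('h \<Rightarrow> 'k)
   \<Rightarrow> ('k \<Rightarrow> 'a::ring_1 \<Rightarrow> 'a) \<Rightarrow> ('a \<Rightarrow> ('h \<times> 'a) list) \<Rightarrow> ('a \<Rightarrow> ('a \<times> 'h) list) \<Rightarrow> bool" where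
  "bicomodule_algebra sH \<Delta> \<epsilon> sA psl psr \<longleftrightarrow>
     tlinear sA sH sA psl \<and>
     tlinear sA sA sH psr \<and>
     \<comment> \<open>left comodule\<close>
     (\<forall>a. teq3 sH sH sA (tmap_l \<Delta> (psl a)) (tmap_r psl (psl a))) \<and>
     (\<forall>a. sum_list (map (\<lambda>(h, x). sA (\<epsilon> h) x) (psl a)) = a) \<and>
     \<comment> \<open>right comodule\<close>
     (\<forall>a. teq3 sA sH sH (tmap_l psr (psr a)) (tmap_r \<Delta> (psr a))) \<and>
     (\<forall>a. sum_list (map (\<lambda>(x, h). sA (\<epsilon> h) x) (psr a)) = a) \<and>
     \<comment> \<open>bicomodule\<close>
     (\<forall>a. teq3 sH sA sH (tmap_r psr (psl a)) (tmap_l psl (psr a))) \<and>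
     \<comment> \<open>algebra maps\<close>
     (\<forall>a b. teq2 sH sA (psl (a * b)) (tmul (psl a) (psl b))) \<and>
     teq2 sH sA (psl 1) [(1, 1)] \<and>
     (\<forall>a b. teq2 sA sH (psr (a * b)) (tmul (psr a) (psr b))) \<and>
     teq2 sA sH (psr 1) [(1, 1)]"

definition LR_twisting_datum ::
  "('k::field \<Rightarrow> 'h::ring_1 \<Rightarrow> 'h) \<Rightarrow> ('h \<Rightarrow> ('h \<times> 'h) list) \<Rightarrow> ('h \<Rightarrow> 'k)
   \<Rightarrow> ('k \<Rightarrow> 'a::ring_1 \<Rightarrow> 'a) \<Rightarrow> ('h \<Rightarrow> 'a \<Rightarrow> 'a) \<Rightarrow> ('a \<Rightarrow> 'h \<Rightarrow> 'a)
   \<Rightarrow> ('a \<Rightarrow> ('h \<times> 'a) list) \<Rightarrow> ('a \<Rightarrow> ('a \<times> 'h) list) \<Rightarrow> bool" where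
  "LR_twisting_datum sH \<Delta> \<epsilon> sA pl pr psl psr \<longleftrightarrow>
     bialgebra sH \<Delta> \<epsilon> \<and>
     bimodule_algebra sH \<Delta> \<epsilon> sA pl pr \<and>
     bicomodule_algebra sH \<Delta> \<epsilon> sA psl psr \<and>
     (\<forall>h a. teq2 sH sA (psl (pl h a)) (map (\<lambda>(x, y). (x, pl h y)) (psl a))) \<and>
     (\<forall>h a. teq2 sA sH (psr (pl h a)) (map (\<lambda>(x, y). (pl h x, y)) (psr a))) \<and>
     (\<forall>h a. teq2 sH sA (psl (pr a h)) (map (\<lambda>(x, y). (x, pr y h)) (psl a))) \<and>
     (\<forall>h a. teq2 sA sH (psr (pr a h)) (map (\<lambda>(x, y). (pr x h, y)) (psr a)))"

text \<open>The twisted product  a \<bullet> b = (a_[0] . b_<1>)(a_[-1] . b_<0>).\<close>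
definition twisted_mult ::
  "('h \<Rightarrow> 'a::{times,comm_monoid_add} \<Rightarrow> 'a) \<Rightarrow> ('a \<Rightarrow> 'h \<Rightarrow> 'a)
   \<Rightarrow> ('a \<Rightarrow> ('h \<times> 'a) list) \<Rightarrow> ('a \<Rightarrow> ('a \<times> 'h) list) \<Rightarrow> 'a \<Rightarrow> 'a \<Rightarrow> 'a" where
  "twisted_mult pl pr psl psr a b =
     sum_list (map (\<lambda>(am1, a0). sum_list (map (\<lambda>(b0, b1). pr a0 b1 * pl am1 b0) (psr b))) (psl a))"

end

theory Submission
  imports Defs
begin


abbreviation lin where "lin \<equiv> Vector_Spaces.linear"

lemma vs_field: "vector_space ((*) :: 'k::field \<Rightarrow> 'k \<Rightarrow> 'k)"
  by unfold_locales (auto simp: algebra_simps)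

lemma lin_sum_list_gen:
  assumes "lin s1 s2 f"
  shows "f (sum_list xs) = sum_list (map f xs)"
proof -
  interpret linear s1 s2 f by fact
  show ?thesis by (induction xs) (auto simp: add zero)
qed

lemma dual_sep:
  fixes s :: "'k::field \<Rightarrow> 'a::ab_group_add \<Rightarrow> 'a"
  assumes vs: "vector_space s" and h: "\<And>\<phi>. lin s (*) \<phi> \<Longrightarrow> \<phi> x = \<phi> y"
  shows "x = y"
proof (rule ccontr)
  assume ne: "x \<noteq> y"
  interpret vector_space_pair s "(*)" using vs vs_field by (simp add: vector_space_pair_def)
  have "vs1.independent {x - y}"
    using ne vs1.independent_insertI[of "x - y" "{}"] by (simp add: vs1.span_empty)
  then obtain g where g: "lin s (*) g" "g (x - y) = 1"
    using linear_independent_extend[of "{x - y}" "\<lambda>_. 1"] by auto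
  interpret linear s "(*)" g by fact
  have "g x = g y" using h g(1) .
  then have "g (x - y) = 0" by (simp add: diff)
  with g show False by simp
qed

definition bilinA where
  "bilinA sV sW sA F \<longleftrightarrow> (\<forall>v. lin sW sA (F v)) \<and> (\<forall>w. lin sV sA (\<lambda>v. F v w))"

definition trilinA where
  "trilinA sU sV sW sA F \<longleftrightarrow> (\<forall>v w. lin sU sA (\<lambda>u. F u v w)) \<and>
     (\<forall>u w. lin sV sA (\<lambda>v. F u v w)) \<and> (\<forall>u v. lin sW sA (\<lambda>w. F u v w))"

lemma lin_comp: "lin s1 s2 f \<Longrightarrow> lin s2 s3 g \<Longrightarrow> lin s1 s3 (\<lambda>x. g (f x))"
  using Vector_Spaces.linear_compose[of s1 s2 f s3 g] by (simp add: o_def)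

lemma teq2_app:
  assumes "teq2 sV sW xs ys" "bilinA sV sW sA F" "vector_space sA"
  shows "sum_list (map (\<lambda>(v, w). F v w) xs) = sum_list (map (\<lambda>(v, w). F v w) ys)"
proof (rule dual_sep[OF assms(3)])
  fix \<phi> assume p: "lin sA (*) \<phi>"
  have "bilin sV sW (\<lambda>v w. \<phi> (F v w))"
    using assms(2) p unfolding bilin_def bilinA_def by (auto intro: lin_comp)
  then have "sum_list (map (\<lambda>(v, w). \<phi> (F v w)) xs) = sum_list (map (\<lambda>(v, w). \<phi> (F v w)) ys)"
    using assms(1) unfolding teq2_def by blast
  then show "\<phi> (sum_list (map (\<lambda>(v, w). F v w) xs)) = \<phi> (sum_list (map (\<lambda>(v, w). F v w) ys))"
    by (simp add: lin_sum_list_gen[OF p] o_def case_prod_unfold)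
qed

lemma teq3_app:
  assumes "teq3 sU sV sW xs ys" "trilinA sU sV sW sA F" "vector_space sA"
  shows "sum_list (map (\<lambda>(u, v, w). F u v w) xs) = sum_list (map (\<lambda>(u, v, w). F u v w) ys)"
proof (rule dual_sep[OF assms(3)])
  fix \<phi> assume p: "lin sA (*) \<phi>"
  have "trilin sU sV sW (\<lambda>u v w. \<phi> (F u v w))"
    using assms(2) p unfolding trilin_def trilinA_def by (auto intro!: lin_comp[OF _ p])
  then have "sum_list (map (\<lambda>(u, v, w). \<phi> (F u v w)) xs) = sum_list (map (\<lambda>(u, v, w). \<phi> (F u v w)) ys)"
    using assms(1) unfolding teq3_def by blast
  then show "\<phi> (sum_list (map (\<lambda>(u, v, w). F u v w) xs)) = \<phi> (sum_list (map (\<lambda>(u, v, w). F u v w) ys))"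
    by (simp add: lin_sum_list_gen[OF p] o_def case_prod_unfold)
qed

lemma sum_list_concat': "sum_list (concat xss) = sum_list (map sum_list xss)"
  by (induction xss) auto

lemma sum_list_swap:
  fixes f :: "'a \<Rightarrow> 'b \<Rightarrow> 'c::comm_monoid_add"
  shows
  "sum_list (map (\<lambda>x. sum_list (map (\<lambda>y. f x y) ys)) xs) =
   sum_list (map (\<lambda>y. sum_list (map (\<lambda>x. f x y) xs)) ys)"
  by (induction xs) (auto simp: sum_list_addf)

lemma sum_tmul: "sum_list (map (\<lambda>(v, w). F v w) (tmul xs ys)) =
  sum_list (map (\<lambda>(x, y). sum_list (map (\<lambda>(x', y'). F (x * x') (y * y')) ys)) xs)"
  unfolding tmul_def by (simp add: map_concat sum_list_concat' o_def case_prod_unfold)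

lemma sum_tmap_l: "sum_list (map (\<lambda>(u, v, w). F u v w) (tmap_l f xs)) =
  sum_list (map (\<lambda>(x, y). sum_list (map (\<lambda>(x1, x2). F x1 x2 y) (f x))) xs)"
  unfolding tmap_l_def by (simp add: map_concat sum_list_concat' o_def case_prod_unfold)

lemma sum_tmap_r: "sum_list (map (\<lambda>(u, v, w). F u v w) (tmap_r f xs)) =
  sum_list (map (\<lambda>(x, y). sum_list (map (\<lambda>(y1, y2). F x y1 y2) (f y))) xs)"
  unfolding tmap_r_def by (simp add: map_concat sum_list_concat' o_def case_prod_unfold)



lemma pull:
  fixes g :: "'a \<Rightarrow> 'b \<Rightarrow> 'c \<Rightarrow> 'd \<Rightarrow> 'e::comm_monoid_add"
  assumes "\<And>x1 x2. f x1 x2 = sum_list (map (\<lambda>(y1, y2). g x1 x2 y1 y2) ys)"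
  shows "sum_list (map (\<lambda>(x1, x2). f x1 x2) xs) =
    sum_list (map (\<lambda>(y1, y2). sum_list (map (\<lambda>(x1, x2). g x1 x2 y1 y2) xs)) ys)"
  using sum_list_swap[of "\<lambda>x y. g (fst x) (snd x) (fst y) (snd y)" ys xs]
  by (simp add: assms case_prod_unfold)

lemma lin_sumL:
  assumes "\<And>y k. lin s1 s2 (\<lambda>x. f y k x)"
  shows "lin s1 s2 (\<lambda>x. sum_list (map (\<lambda>(y, k). f y k x) L))"
proof -
  have l: "lin s1 s2 (f undefined undefined)" using assms by simp
  then have vs: "vector_space s1" "vector_space s2" by (auto simp: linear_iff)
  show ?thesis
  proof (induction L)
    case Nil
    then show ?case using vs by (simp add: linear_iff module.scale_zero_right module_iff_vector_space)
  next
    case (Cons p L)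
    obtain y k where p: "p = (y, k)" by force
    interpret l1: linear s1 s2 "\<lambda>x. f y k x" by (rule assms)
    interpret l2: linear s1 s2 "\<lambda>x. sum_list (map (\<lambda>(y, k). f y k x) L)" by (rule Cons)
    show ?case unfolding p linear_iff using vs
      by (auto simp: l1.add l2.add l1.scale l2.scale module.scale_right_distrib module_iff_vector_space)
  qed
qed

lemma lin_sumL3:
  assumes "\<And>y k l. lin s1 s2 (\<lambda>x. f y k l x)"
  shows "lin s1 s2 (\<lambda>x. sum_list (map (\<lambda>(y, k, l). f y k l x) L))"
proof -
  have "lin s1 s2 (\<lambda>x. case kl of (k, l) \<Rightarrow> f y k l x)" for y kl
    by (cases kl) (simp add: assms)
  from lin_sumL[of s1 s2 "\<lambda>y kl x. case kl of (k, l) \<Rightarrow> f y k l x", OF this]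
  show ?thesis by (simp add: case_prod_unfold)
qed

lemma k_algebra_lin:
  assumes "k_algebra s"
  shows "lin s s (\<lambda>x. u * x)" "lin s s (\<lambda>x. x * u)"
  using assms unfolding k_algebra_def linear_iff by (auto simp: algebra_simps, metis+)

lemma k_algebra_linI:
  assumes "k_algebra s" "lin s' s g"
  shows "lin s' s (\<lambda>x. u * g x)" "lin s' s (\<lambda>x. g x * u)"
  using lin_comp[OF assms(2) k_algebra_lin(1)[OF assms(1)]]
    lin_comp[OF assms(2) k_algebra_lin(2)[OF assms(1)]] by auto

locale twist =
  fixes sH :: "'k::field \<Rightarrow> 'h::ring_1 \<Rightarrow> 'h"
    and \<Delta> :: "'h \<Rightarrow> ('h \<times> 'h) list"
    and \<epsilon> :: "'h \<Rightarrow> 'k"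
    and sA :: "'k \<Rightarrow> 'a::ring_1 \<Rightarrow> 'a"
    and pl :: "'h \<Rightarrow> 'a \<Rightarrow> 'a"
    and pr :: "'a \<Rightarrow> 'h \<Rightarrow> 'a"
    and psl :: "'a \<Rightarrow> ('h \<times> 'a) list"
    and psr :: "'a \<Rightarrow> ('a \<times> 'h) list"
  assumes kA: "k_algebra sA"
    and LR: "LR_twisting_datum sH \<Delta> \<epsilon> sA pl pr psl psr"
begin

lemma kH: "k_algebra sH" using LR unfolding LR_twisting_datum_def bialgebra_def by auto
lemma vsA: "vector_space sA" using kA unfolding k_algebra_def by auto
lemma vsH: "vector_space sH" using kH unfolding k_algebra_def by auto

lemma bi: "tlinear sH sH sH \<Delta>" "lin sH (*) \<epsilon>"
  "\<And>h. teq3 sH sH sH (tmap_l \<Delta> (\<Delta> h)) (tmap_r \<Delta> (\<Delta> h))"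
  "\<And>h. sum_list (map (\<lambda>(x, y). sH (\<epsilon> x) y) (\<Delta> h)) = h"
  "\<And>h. sum_list (map (\<lambda>(x, y). sH (\<epsilon> y) x) (\<Delta> h)) = h"
  "\<And>g h. teq2 sH sH (\<Delta> (g * h)) (tmul (\<Delta> g) (\<Delta> h))"
  "teq2 sH sH (\<Delta> 1) [(1, 1)]"
  "\<And>g h. \<epsilon> (g * h) = \<epsilon> g * \<epsilon> h" "\<epsilon> 1 = 1"
  using LR unfolding LR_twisting_datum_def bialgebra_def by auto

lemma bm: "\<And>h. lin sA sA (pl h)" "\<And>a. lin sH sA (\<lambda>h. pl h a)"
  "\<And>h. lin sA sA (\<lambda>a. pr a h)" "\<And>a. lin sH sA (pr a)"
  "\<And>g h a. pl (g * h) a = pl g (pl h a)" "\<And>a. pl 1 a = a"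
  "\<And>g h a. pr a (g * h) = pr (pr a g) h" "\<And>a. pr a 1 = a"
  "\<And>g h a. pr (pl h a) g = pl h (pr a g)"
  "\<And>h a b. pl h (a * b) = sum_list (map (\<lambda>(h1, h2). pl h1 a * pl h2 b) (\<Delta> h))"
  "\<And>h a b. pr (a * b) h = sum_list (map (\<lambda>(h1, h2). pr a h1 * pr b h2) (\<Delta> h))"
  "\<And>h. pl h 1 = sA (\<epsilon> h) 1" "\<And>h. pr 1 h = sA (\<epsilon> h) 1"
  using LR unfolding LR_twisting_datum_def bimodule_algebra_def by auto

lemma bc: "tlinear sA sH sA psl" "tlinear sA sA sH psr"
  "\<And>a. teq3 sH sH sA (tmap_l \<Delta> (psl a)) (tmap_r psl (psl a))"
  "\<And>a. sum_list (map (\<lambda>(h, x). sA (\<epsilon> h) x) (psl a)) = a"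
  "\<And>a. teq3 sA sH sH (tmap_l psr (psr a)) (tmap_r \<Delta> (psr a))"
  "\<And>a. sum_list (map (\<lambda>(x, h). sA (\<epsilon> h) x) (psr a)) = a"
  "\<And>a. teq3 sH sA sH (tmap_r psr (psl a)) (tmap_l psl (psr a))"
  "\<And>a b. teq2 sH sA (psl (a * b)) (tmul (psl a) (psl b))"
  "teq2 sH sA (psl 1) [(1, 1)]"
  "\<And>a b. teq2 sA sH (psr (a * b)) (tmul (psr a) (psr b))"
  "teq2 sA sH (psr 1) [(1, 1)]"
  using LR unfolding LR_twisting_datum_def bicomodule_algebra_def by auto

lemma cp: "\<And>h a. teq2 sH sA (psl (pl h a)) (map (\<lambda>(x, y). (x, pl h y)) (psl a))"
  "\<And>h a. teq2 sA sH (psr (pl h a)) (map (\<lambda>(x, y). (pl h x, y)) (psr a))"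
  "\<And>h a. teq2 sH sA (psl (pr a h)) (map (\<lambda>(x, y). (x, pr y h)) (psl a))"
  "\<And>h a. teq2 sA sH (psr (pr a h)) (map (\<lambda>(x, y). (pr x h, y)) (psr a))"
  using LR unfolding LR_twisting_datum_def by auto

lemma lin_idA: "lin sA sA (\<lambda>x. x)" using vsA vector_space.linear_id[OF vsA] by (simp add: id_def)
lemma lin_idH: "lin sH sH (\<lambda>x. x)" using vsH vector_space.linear_id[OF vsH] by (simp add: id_def)

lemma lin_multA1: "lin s sA g \<Longrightarrow> lin s sA (\<lambda>x. u * g x)"
  by (rule k_algebra_linI(1)[OF kA])
lemma lin_multA2: "lin s sA g \<Longrightarrow> lin s sA (\<lambda>x. g x * u)"
  by (rule k_algebra_linI(2)[OF kA])
lemma lin_multH1: "lin s sH g \<Longrightarrow> lin s sH (\<lambda>x. u * g x)"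
  by (rule k_algebra_linI(1)[OF kH])
lemma lin_multH2: "lin s sH g \<Longrightarrow> lin s sH (\<lambda>x. g x * u)"
  by (rule k_algebra_linI(2)[OF kH])
lemma lin_pl1: "lin s sA g \<Longrightarrow> lin s sA (\<lambda>x. pl h (g x))"
  using lin_comp bm(1) by blast
lemma lin_pl2: "lin s sH g \<Longrightarrow> lin s sA (\<lambda>x. pl (g x) a)"
  using lin_comp bm(2) by blast
lemma lin_pr1: "lin s sA g \<Longrightarrow> lin s sA (\<lambda>x. pr (g x) h)"
  using lin_comp bm(3) by blast
lemma lin_pr2: "lin s sH g \<Longrightarrow> lin s sA (\<lambda>x. pr a (g x))"
  using lin_comp bm(4) by blast

lemmas lin_rules = lin_idA lin_idH lin_multA1 lin_multA2 lin_multH1 lin_multH2 lin_pl1 lin_pl2 lin_pr1 lin_pr2 lin_sumL3 lin_sumL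

lemma test: "lin sA sA (\<lambda>x. sum_list (map (\<lambda>(y, k). pr x k * pl g y) L))"
  by (rule lin_rules)+
lemma test2: "lin sH sA (\<lambda>g. sum_list (map (\<lambda>(y, k). pr x k * pl (u * g) y) L))"
  by (rule lin_rules)+

end


lemma vs_scale_lin: "vector_space s \<Longrightarrow> lin s s (s c)"
  unfolding linear_iff
  by (auto simp: module.scale_right_distrib module.scale_scale module_iff_vector_space mult.commute)

lemma bilinI: "(\<And>v. lin sW sA (\<lambda>w. F v w)) \<Longrightarrow> (\<And>w. lin sV sA (\<lambda>v. F v w)) \<Longrightarrow> bilinA sV sW sA F"
  unfolding bilinA_def by auto

lemma trilinI: "(\<And>v w. lin sU sA (\<lambda>u. F u v w)) \<Longrightarrow> (\<And>u w. lin sV sA (\<lambda>v. F u v w)) \<Longrightarrow>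
   (\<And>u v. lin sW sA (\<lambda>w. F u v w)) \<Longrightarrow> trilinA sU sV sW sA F"
  unfolding trilinA_def by auto

lemma tl_lin:
  assumes tl: "tlinear sX sV sW f" and F: "bilinA sV sW sA F" and vs: "vector_space sA" "vector_space sX"
  shows "lin sX sA (\<lambda>x. sum_list (map (\<lambda>(v, w). F v w) (f x)))"
  unfolding linear_iff
proof (intro conjI allI vs)
  fix x y
  show "sum_list (map (\<lambda>(v, w). F v w) (f (x + y))) =
        sum_list (map (\<lambda>(v, w). F v w) (f x)) + sum_list (map (\<lambda>(v, w). F v w) (f y))"
    using teq2_app[OF _ F vs(1), of "f (x + y)" "f x @ f y"] tl unfolding tlinear_def by simp
next
  fix c x
  have "sum_list (map (\<lambda>(v, w). F v w) (f (sX c x))) =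
        sum_list (map (\<lambda>(v, w). F v w) (map (\<lambda>(v, w). (sV c v, w)) (f x)))"
    using teq2_app[OF _ F vs(1)] tl unfolding tlinear_def by blast
  also have "\<dots> = sum_list (map (\<lambda>(v, w). sA c (F v w)) (f x))"
  proof -
    have "\<And>v w. F (sV c v) w = sA c (F v w)"
      using F unfolding bilinA_def linear_iff by blast
    then show ?thesis by (simp add: o_def case_prod_unfold)
  qed
  also have "\<dots> = sA c (sum_list (map (\<lambda>(v, w). F v w) (f x)))"
    by (simp add: lin_sum_list_gen[OF vs_scale_lin[OF vs(1)]] o_def case_prod_unfold)
  finally show "sum_list (map (\<lambda>(v, w). F v w) (f (sX c x))) = sA c (sum_list (map (\<lambda>(v, w). F v w) (f x)))" .
qed

context twist begin


lemma PL_lin: "bilinA sH sA sA F \<Longrightarrow> lin sA sA (\<lambda>a. sum_list (map (\<lambda>(v, w). F v w) (psl a)))"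
  using tl_lin[OF bc(1) _ vsA vsA] .
lemma PR_lin: "bilinA sA sH sA F \<Longrightarrow> lin sA sA (\<lambda>a. sum_list (map (\<lambda>(v, w). F v w) (psr a)))"
  using tl_lin[OF bc(2) _ vsA vsA] .

lemma PL_sum:
  assumes "bilinA sH sA sA F"
  shows "sum_list (map (\<lambda>(g, x). F g x) (psl (sum_list (map (\<lambda>(u, v). T u v) L)))) =
         sum_list (map (\<lambda>(u, v). sum_list (map (\<lambda>(g, x). F g x) (psl (T u v)))) L)"
  using lin_sum_list_gen[OF PL_lin[OF assms], of "map (\<lambda>(u, v). T u v) L"]
  by (simp add: o_def case_prod_unfold)

lemma PR_sum:
  assumes "bilinA sA sH sA F"
  shows "sum_list (map (\<lambda>(g, x). F g x) (psr (sum_list (map (\<lambda>(u, v). T u v) L)))) =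
         sum_list (map (\<lambda>(u, v). sum_list (map (\<lambda>(g, x). F g x) (psr (T u v)))) L)"
  using lin_sum_list_gen[OF PR_lin[OF assms], of "map (\<lambda>(u, v). T u v) L"]
  by (simp add: o_def case_prod_unfold)

lemma PL_mult:
  assumes "bilinA sH sA sA F"
  shows "sum_list (map (\<lambda>(g, x). F g x) (psl (u * v))) =
    sum_list (map (\<lambda>(g1, x1). sum_list (map (\<lambda>(g2, x2). F (g1 * g2) (x1 * x2)) (psl v))) (psl u))"
  using teq2_app[OF bc(8) assms vsA] by (simp add: sum_tmul)

lemma PR_mult:
  assumes "bilinA sA sH sA F"
  shows "sum_list (map (\<lambda>(g, x). F g x) (psr (u * v))) =
    sum_list (map (\<lambda>(g1, x1). sum_list (map (\<lambda>(g2, x2). F (g1 * g2) (x1 * x2)) (psr v))) (psr u))"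
  using teq2_app[OF bc(10) assms vsA] by (simp add: sum_tmul)

lemma PL_pr:
  assumes "bilinA sH sA sA F"
  shows "sum_list (map (\<lambda>(g, x). F g x) (psl (pr a h))) = sum_list (map (\<lambda>(g, y). F g (pr y h)) (psl a))"
  using teq2_app[OF cp(3) assms vsA] by (simp add: o_def case_prod_unfold)
lemma PL_pl:
  assumes "bilinA sH sA sA F"
  shows "sum_list (map (\<lambda>(g, x). F g x) (psl (pl h a))) = sum_list (map (\<lambda>(g, y). F g (pl h y)) (psl a))"
  using teq2_app[OF cp(1) assms vsA] by (simp add: o_def case_prod_unfold)
lemma PR_pr:
  assumes "bilinA sA sH sA F"
  shows "sum_list (map (\<lambda>(x, k). F x k) (psr (pr a h))) = sum_list (map (\<lambda>(y, k). F (pr y h) k) (psr a))"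
  using teq2_app[OF cp(4) assms vsA] by (simp add: o_def case_prod_unfold)
lemma PR_pl:
  assumes "bilinA sA sH sA F"
  shows "sum_list (map (\<lambda>(x, k). F x k) (psr (pl h a))) = sum_list (map (\<lambda>(y, k). F (pl h y) k) (psr a))"
  using teq2_app[OF cp(2) assms vsA] by (simp add: o_def case_prod_unfold)
lemma PL_1:
  assumes "bilinA sH sA sA F"
  shows "sum_list (map (\<lambda>(g, x). F g x) (psl 1)) = F 1 1"
  using teq2_app[OF bc(9) assms vsA] by simp
lemma PR_1:
  assumes "bilinA sA sH sA F"
  shows "sum_list (map (\<lambda>(g, x). F g x) (psr 1)) = F 1 1"
  using teq2_app[OF bc(11) assms vsA] by simp

lemma sc1: "sA c 1 * y = sA c y" "y * sA c 1 = sA c y"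
  using kA unfolding k_algebra_def by (metis mult_1_left, metis mult_1_right)

abbreviation "bul \<equiv> twisted_mult pl pr psl psr"

lemma unit_left: "bul 1 a = a"
proof -
  have "bul 1 a = sum_list (map (\<lambda>(b0, b1). pr 1 b1 * pl 1 b0) (psr a))"
    unfolding twisted_mult_def by (rule PL_1) (rule bilinI; (rule lin_rules)+)
  also have "\<dots> = sum_list (map (\<lambda>(b0, b1). sA (\<epsilon> b1) b0) (psr a))"
    by (simp add: bm sc1)
  finally show ?thesis using bc(6) by simp
qed

lemma unit_right: "bul a 1 = a"
proof -
  have "bul a 1 = sum_list (map (\<lambda>(am1, a0). pr a0 1 * pl am1 1) (psl a))"
    unfolding twisted_mult_def
    by (rule arg_cong[where f=sum_list], rule map_cong, simp, clarify, rule PR_1, (rule bilinI; (rule lin_rules)+))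
  also have "\<dots> = sum_list (map (\<lambda>(am1, a0). sA (\<epsilon> am1) a0) (psl a))"
    by (simp add: bm sc1)
  finally show ?thesis using bc(4) by simp
qed

end

context twist begin

definition E3 where
  "E3 X Y Z = sum_list (map (\<lambda>(h1, h2, a0). sum_list (map (\<lambda>(g, b00, k1). sum_list (map (\<lambda>(c00, k2, c1).
      pr a0 (k1 * k2) * pl h1 (pr b00 c1) * pl h2 (pl g c00)) Z)) Y)) X)"

lemma E3_X: "teq3 sH sH sA X X' \<Longrightarrow> E3 X Y Z = E3 X' Y Z"
  unfolding E3_def by (rule teq3_app[OF _ _ vsA], assumption, rule trilinI; simp add: lin_rules)

lemma E3_Y: "teq3 sH sA sH Y Y' \<Longrightarrow> E3 X Y Z = E3 X Y' Z"
proof -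
  assume t: "teq3 sH sA sH Y Y'"
  have "sum_list (map (\<lambda>(g, b00, k1). sum_list (map (\<lambda>(c00, k2, c1).
      pr a0 (k1 * k2) * pl h1 (pr b00 c1) * pl h2 (pl g c00)) Z)) Y) =
    sum_list (map (\<lambda>(g, b00, k1). sum_list (map (\<lambda>(c00, k2, c1).
      pr a0 (k1 * k2) * pl h1 (pr b00 c1) * pl h2 (pl g c00)) Z)) Y')" for h1 h2 a0
    by (rule teq3_app[OF t _ vsA]) (simp_all add: trilinA_def lin_rules)
  then show ?thesis unfolding E3_def by simp
qed

lemma E3_Z: "teq3 sA sH sH Z Z' \<Longrightarrow> E3 X Y Z = E3 X Y Z'"
proof -
  assume t: "teq3 sA sH sH Z Z'"
  have "sum_list (map (\<lambda>(c00, k2, c1).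
      pr a0 (k1 * k2) * pl h1 (pr b00 c1) * pl h2 (pl g c00)) Z) =
     sum_list (map (\<lambda>(c00, k2, c1).
      pr a0 (k1 * k2) * pl h1 (pr b00 c1) * pl h2 (pl g c00)) Z')" for h1 h2 a0 g b00 k1
    by (rule teq3_app[OF t _ vsA]) (simp_all add: trilinA_def lin_rules)
  then show ?thesis unfolding E3_def by simp
qed

lemma rhs_inner: "sum_list (map (\<lambda>(x, k). pr a0 k * pl h x) (psr (bul b c))) =
  sum_list (map (\<lambda>(h1, h2). sum_list (map (\<lambda>(g, b0). sum_list (map (\<lambda>(b00, k1).
    sum_list (map (\<lambda>(c0, c1). sum_list (map (\<lambda>(c00, k2).
      pr a0 (k1 * k2) * pl h1 (pr b00 c1) * pl h2 (pl g c00)) (psr c0))) (psr c))) (psr b0))) (psl b))) (\<Delta> h))"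
proof -
  have "sum_list (map (\<lambda>(x, k). pr a0 k * pl h x) (psr (bul b c))) =
    sum_list (map (\<lambda>(g, b0). sum_list (map (\<lambda>(c0, c1). sum_list (map (\<lambda>(b00, k1).
      sum_list (map (\<lambda>(c00, k2).
      pr a0 (k1 * k2) * pl h (pr b00 c1 * pl g c00)) (psr c0))) (psr b0))) (psr c))) (psl b))"
    unfolding twisted_mult_def
    by (simp add: PR_sum PR_mult PR_pr PR_pl bilinA_def lin_rules)
  also have "\<dots> = sum_list (map (\<lambda>(g, b0). sum_list (map (\<lambda>(c0, c1). sum_list (map (\<lambda>(b00, k1).
      sum_list (map (\<lambda>(c00, k2). sum_list (map (\<lambda>(h1, h2).
      pr a0 (k1 * k2) * pl h1 (pr b00 c1) * pl h2 (pl g c00)) (\<Delta> h))) (psr c0))) (psr b0))) (psr c))) (psl b))"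
    by (simp add: bm(10) sum_list_const_mult[symmetric] mult.assoc case_prod_unfold)
  also have "\<dots> = sum_list (map (\<lambda>(g, b0). sum_list (map (\<lambda>(b00, k1). sum_list (map (\<lambda>(c0, c1).
      sum_list (map (\<lambda>(c00, k2). sum_list (map (\<lambda>(h1, h2).
      pr a0 (k1 * k2) * pl h1 (pr b00 c1) * pl h2 (pl g c00)) (\<Delta> h))) (psr c0))) (psr c))) (psr b0))) (psl b))"
    by (intro arg_cong[where f=sum_list] map_cong refl, clarify, rule pull, rule refl)
  also have "\<dots> = sum_list (map (\<lambda>(h1, h2). sum_list (map (\<lambda>(g, b0). sum_list (map (\<lambda>(b00, k1).
    sum_list (map (\<lambda>(c0, c1). sum_list (map (\<lambda>(c00, k2).
      pr a0 (k1 * k2) * pl h1 (pr b00 c1) * pl h2 (pl g c00)) (psr c0))) (psr c))) (psr b0))) (psl b))) (\<Delta> h))"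
    by (intro pull) (rule refl)
  finally show ?thesis .
qed

lemma lhs: "bul (bul a b) c = E3 (tmap_r psl (psl a)) (tmap_l psl (psr b)) (tmap_r \<Delta> (psr c))"
proof -
  have "bul (bul a b) c = sum_list (map (\<lambda>(h, a0). sum_list (map (\<lambda>(b0, b1).
    sum_list (map (\<lambda>(g1, a00). sum_list (map (\<lambda>(g2, b00). sum_list (map (\<lambda>(y, k).
      pr (pr a00 b1 * pl h b00) k * pl (g1 * g2) y) (psr c))) (psl b0))) (psl a0))) (psr b))) (psl a))"
    unfolding twisted_mult_def
    by (simp add: PL_sum PL_mult PL_pr PL_pl bilinA_def lin_rules)
  also have "\<dots> = sum_list (map (\<lambda>(h, a0). sum_list (map (\<lambda>(b0, b1).
    sum_list (map (\<lambda>(g1, a00). sum_list (map (\<lambda>(g2, b00). sum_list (map (\<lambda>(y, k).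
      sum_list (map (\<lambda>(k1, k2). pr a00 (b1 * k1) * pl h (pr b00 k2) * pl g1 (pl g2 y)) (\<Delta> k)))
      (psr c))) (psl b0))) (psl a0))) (psr b))) (psl a))"
    by (simp add: bm(11) bm(5) sum_list_mult_const[symmetric] bm(7)[symmetric] bm(9) case_prod_unfold)
  also have "\<dots> = sum_list (map (\<lambda>(h, a0). sum_list (map (\<lambda>(g1, a00).
    sum_list (map (\<lambda>(b0, b1). sum_list (map (\<lambda>(g2, b00). sum_list (map (\<lambda>(y, k).
      sum_list (map (\<lambda>(k1, k2). pr a00 (b1 * k1) * pl h (pr b00 k2) * pl g1 (pl g2 y)) (\<Delta> k)))
      (psr c))) (psl b0))) (psr b))) (psl a0))) (psl a))"
    by (intro arg_cong[where f=sum_list] map_cong refl, clarify, rule pull, rule refl)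
  also have "\<dots> = E3 (tmap_r psl (psl a)) (tmap_l psl (psr b)) (tmap_r \<Delta> (psr c))"
    by (simp add: E3_def sum_tmap_l sum_tmap_r)
  finally show ?thesis .
qed

lemma rhs: "bul a (bul b c) = E3 (tmap_l \<Delta> (psl a)) (tmap_r psr (psl b)) (tmap_l psr (psr c))"
proof -
  have eq: "bul a X = sum_list (map (\<lambda>(h, a0). sum_list (map (\<lambda>(x, k). pr a0 k * pl h x) (psr X))) (psl a))" for X
    by (simp add: twisted_mult_def)
  show ?thesis unfolding eq rhs_inner by (simp add: E3_def sum_tmap_l sum_tmap_r)
qed

lemma add_left: "bul (a + a') b = bul a b + bul a' b"
  and scale_left: "bul (sA c a) b = sA c (bul a b)"
proof -
  have "lin sA sA (\<lambda>a. sum_list (map (\<lambda>(am1, a0). sum_list (map (\<lambda>(b0, b1). pr a0 b1 * pl am1 b0) (psr b))) (psl a)))"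
    by (rule PL_lin) (rule bilinI; (rule lin_rules)+)
  then show "bul (a + a') b = bul a b + bul a' b" "bul (sA c a) b = sA c (bul a b)"
    unfolding twisted_mult_def linear_iff by auto
qed

lemma add_right: "bul a (b + b') = bul a b + bul a b'"
  and scale_right: "bul a (sA c b) = sA c (bul a b)"
proof -
  have l: "lin sA sA (\<lambda>b. sum_list (map (\<lambda>(b0, b1). pr a0 b1 * pl am1 b0) (psr b)))" for a0 am1
    by (rule PR_lin) (rule bilinI; (rule lin_rules)+)
  show "bul a (b + b') = bul a b + bul a b'"
    unfolding twisted_mult_def using l unfolding linear_iff by (simp add: sum_list_addf case_prod_unfold)
  show "bul a (sA c b) = sA c (bul a b)"
    unfolding twisted_mult_def using l unfolding linear_iff
    by (simp add: lin_sum_list_gen[OF vs_scale_lin[OF vsA]] o_def case_prod_unfold)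
qed

lemma assoc: "bul (bul a b) c = bul a (bul b c)"
  unfolding lhs rhs
  using E3_X[OF bc(3)] E3_Y[OF bc(7)] E3_Z[OF bc(5)] by simp

end

theorem proposition4p2:
  fixes sH :: "'k::field \<Rightarrow> 'h::ring_1 \<Rightarrow> 'h"
    and \<Delta> :: "'h \<Rightarrow> ('h \<times> 'h) list"
    and \<epsilon> :: "'h \<Rightarrow> 'k"
    and sA :: "'k \<Rightarrow> 'a::ring_1 \<Rightarrow> 'a"
    and pl :: "'h \<Rightarrow> 'a \<Rightarrow> 'a"
    and pr :: "'a \<Rightarrow> 'h \<Rightarrow> 'a"
    and psl :: "'a \<Rightarrow> ('h \<times> 'a) list"
    and psr :: "'a \<Rightarrow> ('a \<times> 'h) list"
  assumes "k_algebra sA"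
    and "LR_twisting_datum sH \<Delta> \<epsilon> sA pl pr psl psr"
  defines "bullet \<equiv> twisted_mult pl pr psl psr"
  shows "(\<forall>a b c. bullet (bullet a b) c = bullet a (bullet b c)) \<and>
         (\<forall>a. bullet 1 a = a \<and> bullet a 1 = a) \<and>
         (\<forall>a a' b. bullet (a + a') b = bullet a b + bullet a' b) \<and>
         (\<forall>a b b'. bullet a (b + b') = bullet a b + bullet a b') \<and>
         (\<forall>c a b. bullet (sA c a) b = sA c (bullet a b) \<and> bullet a (sA c b) = sA c (bullet a b))"
  proof -
  interpret T: twist sH \<Delta> \<epsilon> sA pl pr psl psr by unfold_locales (rule assms)+
  show ?thesis unfolding bullet_def
    using T.assoc T.unit_left T.unit_right T.add_left T.add_right T.scale_left T.scale_right by auto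
qed

end
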